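(* Let $n\ge 3$ and $S_n$ be as defined below. Then $S_n$ is cancellative and it has a group of fractions $G$ equal to the central localization $S_n\langle a_1a_2\cdots a_n\rangle^{-1}$. Moreover $G\cong F\times C$, where $F=\operatorname{gr}(a_1,\dots,a_{n-1})\subseteq G$ is a free group of rank $n-1$ and $C=\operatorname{gr}(a_1a_2\cdots a_n)\subseteq G$ is an infinite cyclic group.
   Context: For $n\ge 3$, $S_n$ denotes the monoid with generators $a_1,\dots,a_n$ and defining relations $a_1a_2\cdots a_n=a_{\sigma(1)}a_{\sigma(2)}\cdots a_{\sigma(n)}$ for all $\sigma$ in the cyclic subgroup of $\operatorname{Sym}_n$ generated by the cycle $(1,2,\dots,n)$. $\operatorname{gr}(b_1,\dots,b_m)$ denotes the subgroup generated by $b_1,\dots,b_m$, and $\langle z\rangle$ denotes the submonoid generated by $z$. *)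

theory Defs
  imports "HOL-Algebra.Algebra"
begin

text \<open>Generators a_1,...,a_n of S_n are encoded as the letters 0,...,n-1;
  elements of the free monoid are words (nat lists) over {0..<n}.\<close>

definition sn_words :: "nat \<Rightarrow> nat list set" where
  "sn_words n = {w. set w \<subseteq> {0..<n}}"

text \<open>Defining relations: a_1...a_n = a_sigma(1)...a_sigma(n), sigma a power of (1 2 ... n),
  i.e. the word [0..<n] equals each of its cyclic rotations.\<close>
definition sn_rel :: "nat \<Rightarrow> nat list \<Rightarrow> nat list \<Rightarrow> bool" where
  "sn_rel n u v \<longleftrightarrow> (\<exists>k<n. u = [0..<n] \<and> v = rotate k [0..<n])"

text \<open>The monoid congruence generated by the defining relations; S_n is the quotient
  of sn_words n by sn_eq n.\<close>
inductive sn_eq :: "nat \<Rightarrow> nat list \<Rightarrow> nat list \<Rightarrow> bool" for n where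
  refl: "sn_eq n w w"
| sym: "sn_eq n u v \<Longrightarrow> sn_eq n v u"
| trans: "sn_eq n u v \<Longrightarrow> sn_eq n v w \<Longrightarrow> sn_eq n u w"
| rel: "sn_rel n u v \<Longrightarrow> sn_eq n (p @ u @ q) (p @ v @ q)"

definition weval :: "('g, 'b) monoid_scheme \<Rightarrow> (nat \<Rightarrow> 'g) \<Rightarrow> nat list \<Rightarrow> 'g" where
  "weval G x w = foldr (\<lambda>i acc. x i \<otimes>\<^bsub>G\<^esub> acc) w \<one>\<^bsub>G\<^esub>"

definition free_reduced :: "('g \<times> bool) list \<Rightarrow> bool" where
  "free_reduced ws \<longleftrightarrow>
     (\<forall>i. Suc i < length ws \<longrightarrow> \<not> (fst (ws ! i) = fst (ws ! Suc i) \<and> snd (ws ! i) \<noteq> snd (ws ! Suc i)))"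

definition free_basis :: "('g, 'b) monoid_scheme \<Rightarrow> 'g set \<Rightarrow> bool" where
  "free_basis G B \<longleftrightarrow> B \<subseteq> carrier G \<and>
     (\<forall>ws :: ('g \<times> bool) list. ws \<noteq> [] \<and> fst ` set ws \<subseteq> B \<and> free_reduced ws \<longrightarrow>
        foldr (\<lambda>(g, b) acc. (if b then g else inv\<^bsub>G\<^esub> g) \<otimes>\<^bsub>G\<^esub> acc) ws \<one>\<^bsub>G\<^esub> \<noteq> \<one>\<^bsub>G\<^esub>)"

end

theory Submission
  imports Defs
begin


fun act :: "int \<Rightarrow> int list \<Rightarrow> int list" where
  "act a [] = [a]"
| "act a (b # w) = (if b = - a then w else a # b # w)"

definition E :: "int list \<Rightarrow> int list \<Rightarrow> int list" where
  "E g h = foldr act g h"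

fun red :: "int list \<Rightarrow> bool" where
  "red [] = True"
| "red [a] = True"
| "red (a # b # w) = (b \<noteq> - a \<and> red (b # w))"

definition Ls :: "nat \<Rightarrow> int set" where
  "Ls n = {l. l \<noteq> 0 \<and> \<bar>l\<bar> < int n}"

definition Wc :: "nat \<Rightarrow> int list set" where
  "Wc n = {g. red g \<and> set g \<subseteq> Ls n}"

lemma red_tl: "red (a # w) \<Longrightarrow> red w"
  by (cases w) auto

lemma red_act: "red w \<Longrightarrow> red (act a w)"
  by (cases w) (auto intro: red_tl)

lemma set_act: "set (act a w) \<subseteq> insert a (set w)"
  by (cases w) auto

lemma E_simps[simp]: "E [] h = h" "E (a # g) h = act a (E g h)" "E (g @ g') h = E g (E g' h)"
  by (auto simp: E_def)

lemma red_E: "red h \<Longrightarrow> red (E g h)"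
  by (induction g) (auto intro: red_act)

lemma set_E: "set (E g h) \<subseteq> set g \<union> set h"
  apply (induction g) apply simp
  using set_act by fastforce

lemma act_inv: "red w \<Longrightarrow> act a (act (- a) w) = w"
  by (cases w rule: red.cases) auto

lemma act_inv': "red w \<Longrightarrow> act (- a) (act a w) = w"
  using act_inv[of w "-a"] by simp

lemma E_act: "red z \<Longrightarrow> E (act a h) z = act a (E h z)"
  by (cases h) (auto simp: act_inv red_E)

lemma E_assoc: "red z \<Longrightarrow> E (E g h) z = E g (E h z)"
  by (induction g) (auto simp: E_act)

lemma E_append: "red (g @ z) \<Longrightarrow> E g z = g @ z"
proof (induction g)
  case (Cons a g)
  then have "red (g @ z)" by (auto intro: red_tl)
  with Cons show ?case by (cases "g @ z") auto
qed simp

lemma E_nil: "red g \<Longrightarrow> E g [] = g"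
  using E_append[of g "[]"] by simp

definition ginv :: "int list \<Rightarrow> int list" where
  "ginv g = rev (map uminus g)"

lemma E_ginv: "red z \<Longrightarrow> E (ginv g) (E g z) = z"
  by (induction g arbitrary: z) (auto simp: ginv_def act_inv' red_E)

lemma Ls_uminus: "l \<in> Ls n \<Longrightarrow> - l \<in> Ls n"
  by (auto simp: Ls_def)

lemma Wc_E: "g \<in> Wc n \<Longrightarrow> h \<in> Wc n \<Longrightarrow> E g h \<in> Wc n"
  unfolding Wc_def using red_E set_E by blast

lemma Wc_ginv: "g \<in> Wc n \<Longrightarrow> E (ginv g) [] \<in> Wc n"
  unfolding Wc_def using red_E[of "[]" "ginv g"] set_E[of "ginv g" "[]"]
  by (auto simp: ginv_def Wc_def intro: Ls_uminus)

lemma E_ginv_self: "red g \<Longrightarrow> E (ginv g) g = []"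
  using E_ginv[of "[]" g] E_nil[of g] by simp

definition Gp :: "nat \<Rightarrow> (int list \<times> int) monoid" where
  "Gp n = \<lparr>carrier = Wc n \<times> UNIV, monoid.mult = (\<lambda>(g,a) (h,b). (E g h, a + b)), one = ([], 0)\<rparr>"

lemma Gp_simps[simp]: "carrier (Gp n) = Wc n \<times> UNIV" "(g,a) \<otimes>\<^bsub>Gp n\<^esub> (h,b) = (E g h, a + b)"
  "\<one>\<^bsub>Gp n\<^esub> = ([], 0)"
  by (auto simp: Gp_def)

lemma Wc_red: "g \<in> Wc n \<Longrightarrow> red g" by (auto simp: Wc_def)

lemma group_Gp: "group (Gp n)"
proof (rule groupI)
  fix x y assume "x \<in> carrier (Gp n)" "y \<in> carrier (Gp n)"
  then show "x \<otimes>\<^bsub>Gp n\<^esub> y \<in> carrier (Gp n)" by (cases x, cases y) (auto intro: Wc_E)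
next
  show "\<one>\<^bsub>Gp n\<^esub> \<in> carrier (Gp n)" by (auto simp: Wc_def)
next
  fix x y z assume "x \<in> carrier (Gp n)" "y \<in> carrier (Gp n)" "z \<in> carrier (Gp n)"
  then show "x \<otimes>\<^bsub>Gp n\<^esub> y \<otimes>\<^bsub>Gp n\<^esub> z = x \<otimes>\<^bsub>Gp n\<^esub> (y \<otimes>\<^bsub>Gp n\<^esub> z)"
    by (cases x, cases y, cases z) (auto simp: E_assoc Wc_red)
next
  fix x assume "x \<in> carrier (Gp n)"
  then show "\<one>\<^bsub>Gp n\<^esub> \<otimes>\<^bsub>Gp n\<^esub> x = x" by (cases x) auto
next
  fix x assume "x \<in> carrier (Gp n)"
  then obtain g a where x: "x = (g,a)" "g \<in> Wc n" by auto
  show "\<exists>y\<in>carrier (Gp n). y \<otimes>\<^bsub>Gp n\<^esub> x = \<one>\<^bsub>Gp n\<^esub>"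
    apply (rule bexI[of _ "(E (ginv g) [], - a)"])
    using x by (auto simp: E_assoc E_ginv Wc_red E_nil Wc_ginv E_ginv_self)
qed

lemma inv_Gp: "g \<in> Wc n \<Longrightarrow> inv\<^bsub>Gp n\<^esub> (g, a) = (E (ginv g) [], - a)"
  apply (rule group.inv_equality[OF group_Gp])
  by (auto simp: E_assoc E_ginv Wc_red E_nil Wc_ginv E_ginv_self)



abbreviation D :: "nat \<Rightarrow> nat list" where "D n \<equiv> [0..<n]"
definition Dp :: "nat \<Rightarrow> nat \<Rightarrow> nat list" where "Dp n k = concat (replicate k [0..<n])"

lemma Dp_simps[simp]: "Dp n 0 = []" "Dp n (Suc k) = [0..<n] @ Dp n k"
  by (auto simp: Dp_def)

lemma Dp_add: "Dp n (a + b) = Dp n a @ Dp n b"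
  by (induction a) auto

lemma length_Dp[simp]: "length (Dp n k) = k * n"
  by (induction k) auto

lemma set_Dp: "set (Dp n k) \<subseteq> {0..<n}"
  by (induction k) auto

lemma sn_app: "sn_eq n u v \<Longrightarrow> sn_eq n (p @ u @ q) (p @ v @ q)"
proof (induction rule: sn_eq.induct)
  case (refl w) then show ?case by (rule sn_eq.refl)
next
  case (sym u v) then show ?case using sn_eq.sym by blast
next
  case (trans u v w) then show ?case by (metis sn_eq.trans)
next
  case (rel u v p' q')
  then show ?case using sn_eq.rel[of n u v "p @ p'" "q' @ q"] by simp
qed

lemma sn_appR: "sn_eq n u v \<Longrightarrow> sn_eq n (u @ q) (v @ q)"
  using sn_app[of n u v "[]" q] by simp
lemma sn_appL: "sn_eq n u v \<Longrightarrow> sn_eq n (p @ u) (p @ v)"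
  using sn_app[of n u v p "[]"] by simp

lemma sn_rot: "k < n \<Longrightarrow> sn_eq n (p @ [0..<n] @ q) (p @ rotate k [0..<n] @ q)"
  by (rule sn_eq.rel) (auto simp: sn_rel_def)

lemma sn_rot1: "k < n \<Longrightarrow> sn_eq n [0..<n] (rotate k [0..<n])"
  using sn_rot[of k n "[]" "[]"] by simp

lemma rotate_D: "j \<le> n \<Longrightarrow> rotate j [0..<n] = [j..<n] @ [0..<j]"
proof (cases "j = n")
  case True then show ?thesis using rotate_id[of n "[0..<n]"] by simp
next
  case False
  assume "j \<le> n" then have "j < n" using False by simp
  then show ?thesis by (simp add: rotate_drop_take)
qed

lemma sn_rotle: "j \<le> n \<Longrightarrow> sn_eq n [0..<n] ([j..<n] @ [0..<j])"
proof (cases "j = n")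
  case True then show ?thesis by (simp add: sn_eq.refl)
next
  case False
  assume "j \<le> n" then have "j < n" using False by simp
  then show ?thesis using sn_rot1[of j n] rotate_D[of j n] by simp
qed

lemma upt_split: "i < n \<Longrightarrow> [0..<n] = [0..<i] @ [i] @ [Suc i..<n]"
proof -
  assume "i < n"
  then have "[0..<n] = [0..<i] @ [i..<n]" using upt_add_eq_append[of 0 i "n-i"] by simp
  moreover have "[i..<n] = i # [Suc i..<n]" using \<open>i<n\<close> upt_conv_Cons by blast
  ultimately show ?thesis by simp
qed

lemma letter_comm: "i < n \<Longrightarrow> sn_eq n ([i] @ [0..<n]) ([0..<n] @ [i])"
proof -
  assume i: "i < n"
  have r1: "sn_eq n [0..<n] ([Suc i..<n] @ [0..<i] @ [i])"
    using sn_rotle[of "Suc i" n] i by (simp)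
  have r2: "sn_eq n [0..<n] ([i..<n] @ [0..<i])" using sn_rotle[of i n] i by simp
  have e: "[i..<n] = i # [Suc i..<n]" using i by (simp add: upt_conv_Cons)
  have "sn_eq n ([i] @ [0..<n]) ([i] @ ([Suc i..<n] @ [0..<i] @ [i]))"
    by (rule sn_appL[OF r1])
  moreover have "sn_eq n (([i..<n] @ [0..<i]) @ [i]) ([0..<n] @ [i])"
    by (rule sn_appR[OF sn_eq.sym[OF r2]])
  ultimately show ?thesis using e by (auto intro: sn_eq.trans)
qed

lemma word_comm: "set w \<subseteq> {0..<n} \<Longrightarrow> sn_eq n (w @ [0..<n]) ([0..<n] @ w)"
proof (induction w)
  case Nil then show ?case by (simp add: sn_eq.refl)
next
  case (Cons a w)
  then have a: "a < n" and w: "set w \<subseteq> {0..<n}" by auto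
  have "sn_eq n ([a] @ w @ [0..<n]) ([a] @ [0..<n] @ w)"
    using sn_appL[OF Cons.IH[OF w], of "[a]"] by simp
  moreover have "sn_eq n (([a] @ [0..<n]) @ w) (([0..<n] @ [a]) @ w)"
    using sn_appR[OF letter_comm[OF a]] by simp
  ultimately show ?case by (auto intro: sn_eq.trans)
qed

lemma word_commDp: "set w \<subseteq> {0..<n} \<Longrightarrow> sn_eq n (w @ Dp n k) (Dp n k @ w)"
proof (induction k)
  case 0 then show ?case by (simp add: sn_eq.refl)
next
  case (Suc k)
  have "sn_eq n (w @ [0..<n] @ Dp n k) ([0..<n] @ w @ Dp n k)"
    using sn_appR[OF word_comm[OF Suc.prems], of "Dp n k"] by simp
  moreover have "sn_eq n ([0..<n] @ w @ Dp n k) ([0..<n] @ Dp n k @ w)"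
    using sn_appL[OF Suc.IH[OF Suc.prems], of "[0..<n]"] by simp
  ultimately show ?case by (auto intro: sn_eq.trans)
qed

lemma sn_length: "sn_eq n u v \<Longrightarrow> length u = length v"
  by (induction rule: sn_eq.induct) (auto simp: sn_rel_def)



definition Rots :: "nat \<Rightarrow> nat list set" where
  "Rots n = {rotate k [0..<n] | k. k < n}"

definition isrot :: "nat \<Rightarrow> nat list \<Rightarrow> bool" where
  "isrot n r \<longleftrightarrow> length r = n \<and> (\<exists>c<n. \<forall>i<n. r ! i = (c + i) mod n)"

lemma rot_char: "r \<in> Rots n \<longleftrightarrow> isrot n r"
proof
  assume "r \<in> Rots n"
  then obtain k where k: "k < n" "r = rotate k [0..<n]" by (auto simp: Rots_def)
  then show "isrot n r" unfolding isrot_def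
    by (auto simp: nth_rotate intro!: exI[of _ k])
next
  assume "isrot n r"
  then obtain c where c: "c < n" "length r = n" "\<forall>i<n. r ! i = (c + i) mod n" by (auto simp: isrot_def)
  have "r = rotate c [0..<n]"
    by (rule nth_equalityI) (use c in \<open>auto simp: nth_rotate\<close>)
  then show "r \<in> Rots n" using c by (auto simp: Rots_def)
qed

lemma Rots_length: "r \<in> Rots n \<Longrightarrow> length r = n"
  by (auto simp: Rots_def)

lemma D_Rots: "0 < n \<Longrightarrow> [0..<n] \<in> Rots n"
  unfolding Rots_def by (rule CollectI, rule exI[of _ 0]) simp

lemma overlap:
  assumes "isrot n (y @ r1)" "isrot n (r1 @ r2)" "r1 \<noteq> []"
  shows "y = r2"
proof -
  obtain c where c: "c < n" "length (y @ r1) = n" "\<forall>i<n. (y @ r1) ! i = (c + i) mod n"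
    using assms(1) by (auto simp: isrot_def)
  obtain d where d: "d < n" "length (r1 @ r2) = n" "\<forall>i<n. (r1 @ r2) ! i = (d + i) mod n"
    using assms(2) by (auto simp: isrot_def)
  have ly: "length y = length r2" using c d by simp
  have "(y @ r1) ! length y = (c + length y) mod n" using c assms(3) by (auto)
  moreover have "(r1 @ r2) ! 0 = d mod n" using d assms(3) by auto
  moreover have "(y @ r1) ! length y = (r1 @ r2) ! 0" using assms(3) by (simp add: nth_append)
  ultimately have dc: "d mod n = (c + length y) mod n" by simp
  show ?thesis
  proof (rule nth_equalityI)
    show "length y = length r2" by (rule ly)
    fix i assume i: "i < length y"
    have "y ! i = (y @ r1) ! i" using i by (simp add: nth_append)
    also have "\<dots> = (c + i) mod n" using c i by auto
    finally have yi: "y ! i = (c + i) mod n" .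
    have "r2 ! i = (r1 @ r2) ! (length r1 + i)" by (simp add: nth_append)
    also have "\<dots> = (d + (length r1 + i)) mod n"
      using d(3)[rule_format, of "length r1 + i"] d(2) i ly by (simp del: nth_append)
    also have "\<dots> = (d mod n + (length r1 + i)) mod n" by (simp add: mod_add_left_eq)
    also have "\<dots> = ((c + length y) mod n + (length r1 + i)) mod n" using dc by simp
    also have "\<dots> = (c + length y + length r1 + i) mod n" by (simp add: mod_add_left_eq add.assoc)
    also have "\<dots> = (c + i + n) mod n" using c by (simp add: algebra_simps)
    also have "\<dots> = (c + i) mod n" by simp
    finally show "y ! i = r2 ! i" using yi by simp
  qed
qed

definition hasrot :: "nat \<Rightarrow> nat list \<Rightarrow> bool" where
  "hasrot n t \<longleftrightarrow> n \<le> length t \<and> drop (length t - n) t \<in> Rots n"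

definition step :: "nat \<Rightarrow> nat list \<Rightarrow> nat \<Rightarrow> nat list" where
  "step n s a = (if hasrot n (s @ [a]) then take (length (s @ [a]) - n) (s @ [a]) else s @ [a])"

definition nf :: "nat \<Rightarrow> nat list \<Rightarrow> nat list" where
  "nf n w = foldl (step n) [] w"

definition irr :: "nat \<Rightarrow> nat list \<Rightarrow> bool" where
  "irr n s \<longleftrightarrow> \<not> (\<exists>x r y. s = x @ r @ y \<and> r \<in> Rots n)"

lemma irr_prefix: "irr n (s @ t) \<Longrightarrow> irr n s"
  unfolding irr_def by (metis append.assoc)

lemma irr_take: "irr n s \<Longrightarrow> irr n (take k s)"
  by (metis append_take_drop_id irr_prefix)

lemma irr_snoc: "irr n s \<Longrightarrow> \<not> hasrot n (s @ [a]) \<Longrightarrow> irr n (s @ [a])"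
proof -
  assume s: "irr n s" and h: "\<not> hasrot n (s @ [a])"
  show ?thesis unfolding irr_def
  proof
    assume "\<exists>x r y. s @ [a] = x @ r @ y \<and> r \<in> Rots n"
    then obtain x r y where xr: "s @ [a] = x @ r @ y" "r \<in> Rots n" by blast
    show False
    proof (cases "y = []")
      case True
      then have "drop (length (s @ [a]) - n) (s @ [a]) = r" using xr Rots_length[OF xr(2)] by simp
      then show False using h xr True Rots_length[OF xr(2)] by (auto simp: hasrot_def)
    next
      case False
      then obtain y' where "y = y' @ [a]" using xr
        by (metis append_assoc append_butlast_last_id last_appendR last_snoc)
      then have "s = x @ r @ y'" using xr by simp
      then show False using s xr by (auto simp: irr_def)
    qed
  qed
qed

lemma hasrot_pos: "hasrot n t \<Longrightarrow> 0 < n"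
  by (auto simp: hasrot_def Rots_def)

lemma irr_step: "irr n s \<Longrightarrow> irr n (step n s a)"
proof (cases "hasrot n (s @ [a])")
  case True
  assume s: "irr n s"
  have "take (length (s @ [a]) - n) (s @ [a]) = take (length (s @ [a]) - n) s"
    using hasrot_pos[OF True] by simp
  then show ?thesis using True s irr_take by (simp add: step_def)
next
  case False
  assume "irr n s"
  then show ?thesis using False irr_snoc by (simp add: step_def)
qed

lemma irr_hasrot: "irr n (s @ [a]) \<Longrightarrow> \<not> hasrot n (s @ [a])"
  unfolding irr_def hasrot_def
  by (metis append.right_neutral append_take_drop_id)

lemma push_no_del: "irr n (s @ t) \<Longrightarrow> foldl (step n) s t = s @ t"
proof (induction t arbitrary: s)
  case Nil then show ?case by simp
next
  case (Cons a t)
  have "irr n (s @ [a])" using Cons.prems irr_prefix[of n "s @ [a]" t] by simp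
  then have "step n s a = s @ [a]" using irr_hasrot by (simp add: step_def)
  then show ?case using Cons.IH[of "s @ [a]"] Cons.prems by simp
qed

lemma core:
  assumes s: "irr n s" and r: "r \<in> Rots n"
  shows "foldl (step n) s r = s"
proof -
  have lr: "length r = n" using Rots_length[OF r] .
  define P where "P j \<longleftrightarrow> hasrot n (s @ take j r)" for j
  have Pn: "P n" unfolding P_def hasrot_def using lr r by simp
  define j where "j = (LEAST j. P j)"
  have Pj: "P j" unfolding j_def using Pn by (rule LeastI)
  have jn: "j \<le> n" unfolding j_def using Pn by (rule Least_le)
  have nP: "\<not> P j'" if "j' < j" for j' using that unfolding j_def using not_less_Least by blast
  have j0: "j \<noteq> 0"
  proof
    assume "j = 0"
    then have "hasrot n s" using Pj by (simp add: P_def)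
    then show False using s unfolding hasrot_def irr_def
      by (metis append.right_neutral append_take_drop_id)
  qed
  have irrj: "irr n (s @ take j' r)" if "j' < j" for j'
    using that
  proof (induction j')
    case 0 then show ?case using s by simp
  next
    case (Suc j')
    have jr: "j' < length r" using Suc.prems jn lr by simp
    have tk: "take (Suc j') r = take j' r @ [r ! j']" using jr by (simp add: take_Suc_conv_app_nth)
    have "\<not> hasrot n ((s @ take j' r) @ [r ! j'])" using nP[OF Suc.prems] tk by (simp add: P_def)
    then show ?case using irr_snoc[OF Suc.IH] Suc.prems tk by simp
  qed
  define j1 where "j1 = j - 1"
  have jj: "j = Suc j1" using j0 j1_def by simp
  have j1r: "j1 < length r" using jj jn lr by simp
  have rsplit: "r = take j1 r @ [r ! j1] @ drop j r"
    using id_take_nth_drop[OF j1r] jj by simp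
  have tkj: "take j r = take j1 r @ [r ! j1]" using j1r jj by (simp add: take_Suc_conv_app_nth)
  have A: "foldl (step n) s (take j1 r) = s @ take j1 r"
    using push_no_del irrj[of j1] jj by simp
  have hr: "hasrot n ((s @ take j1 r) @ [r ! j1])" using Pj tkj by (simp add: P_def)
  define t where "t = s @ take j r"
  have B: "step n (s @ take j1 r) (r ! j1) = take (length t - n) t"
    using hr tkj by (simp add: step_def t_def)
  have "foldl (step n) s r = foldl (step n) s (take j1 r @ [r ! j1] @ drop j r)"
    by (rule arg_cong[OF rsplit])
  also have "\<dots> = foldl (step n) (take (length t - n) t) (drop j r)"
    by (simp only: foldl_append foldl_Cons foldl_Nil A B)
  also have "\<dots> = s"
  proof (cases "j = n")
    case True
    then show ?thesis using lr by (simp add: t_def)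
  next
    case False
    then have jl: "j < n" using jn by simp
    have lt: "length t = length s + j" using jn lr by (simp add: t_def)
    have ln: "n \<le> length t" using Pj by (simp add: P_def hasrot_def t_def)
    define s0 where "s0 = take (length s - (n - j)) s"
    define y where "y = drop (length s - (n - j)) s"
    have ss: "s = s0 @ y" by (simp add: s0_def y_def)
    have tk: "take (length t - n) t = s0" using ln lt jl by (simp add: t_def s0_def)
    have dr: "drop (length t - n) t = y @ take j r" using ln lt jl by (simp add: t_def y_def)
    have "isrot n (y @ take j r)" using Pj dr rot_char by (simp add: P_def hasrot_def t_def)
    moreover have "isrot n (take j r @ drop j r)" using r rot_char by simp
    moreover have "take j r \<noteq> []" using j0 lr jn by (cases r) auto
    ultimately have "y = drop j r" by (rule overlap)
    then show ?thesis using tk push_no_del[of n s0 y] s ss by simp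
  qed
  finally show ?thesis .
qed

lemma nf_irr: "irr n (nf n w)"
proof -
  have "irr n (foldl (step n) s w)" if "irr n s" for s
    using that by (induction w arbitrary: s) (auto intro: irr_step)
  moreover have "irr n []" unfolding irr_def
    by (auto simp: Rots_def dest: arg_cong[of _ _ length])
  ultimately show ?thesis unfolding nf_def by simp
qed

lemma nf_append: "nf n (u @ v) = foldl (step n) (nf n u) v"
  by (simp add: nf_def)

lemma nf_rot: "r \<in> Rots n \<Longrightarrow> nf n (p @ r @ q) = nf n (p @ q)"
  by (simp only: nf_append[symmetric] append.assoc[symmetric] core nf_irr)
    (simp add: nf_append core nf_irr)

lemma nf_sn: "sn_eq n u v \<Longrightarrow> nf n u = nf n v"
proof (induction rule: sn_eq.induct)
  case (rel u v p q)
  then obtain k where k: "k < n" "u = [0..<n]" "v = rotate k [0..<n]" by (auto simp: sn_rel_def)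
  then have "u \<in> Rots n" "v \<in> Rots n" using D_Rots[of n] by (auto simp: Rots_def)
  then show ?case by (simp add: nf_rot)
qed auto

lemma nf_Dp: "0 < n \<Longrightarrow> nf n (u @ Dp n k) = nf n u"
proof (induction k)
  case (Suc k)
  have "nf n (u @ Dp n (Suc k)) = nf n (u @ [0..<n] @ Dp n k)" by simp
  also have "\<dots> = nf n (u @ Dp n k)" by (rule nf_rot[OF D_Rots[OF Suc.prems]])
  finally show ?case using Suc by simp
qed simp

lemma nf_decomp: "set w \<subseteq> {0..<n} \<Longrightarrow> \<exists>k. sn_eq n w (nf n w @ Dp n k) \<and> length w = length (nf n w) + k * n"
proof (induction w rule: rev_induct)
  case Nil then show ?case by (auto simp: nf_def intro!: exI[of _ 0] sn_eq.refl)
next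
  case (snoc a w)
  then have a: "a < n" and w: "set w \<subseteq> {0..<n}" by auto
  obtain k where k: "sn_eq n w (nf n w @ Dp n k)" "length w = length (nf n w) + k * n"
    using snoc.IH[OF w] by blast
  have e1: "sn_eq n (w @ [a]) (nf n w @ [a] @ Dp n k)"
  proof -
    have "sn_eq n (w @ [a]) (nf n w @ Dp n k @ [a])" using sn_appR[OF k(1), of "[a]"] by simp
    moreover have "sn_eq n (nf n w @ Dp n k @ [a]) (nf n w @ [a] @ Dp n k)"
      using sn_appL[OF sn_eq.sym[OF word_commDp[of "[a]" n k]], of "nf n w"] a by simp
    ultimately show ?thesis by (rule sn_eq.trans)
  qed
  have nfs: "nf n (w @ [a]) = step n (nf n w) a" by (simp add: nf_def)
  show ?case
  proof (cases "hasrot n (nf n w @ [a])")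
    case False
    then show ?thesis using e1 k nfs by (auto simp: step_def)
  next
    case True
    define t where "t = nf n w @ [a]"
    have ln: "n \<le> length t" and rr: "drop (length t - n) t \<in> Rots n"
      using True by (auto simp: hasrot_def t_def)
    then obtain k' where k': "k' < n" "drop (length t - n) t = rotate k' [0..<n]" by (auto simp: Rots_def)
    have tt: "t = take (length t - n) t @ drop (length t - n) t" by simp
    have "sn_eq n (take (length t - n) t @ [0..<n] @ Dp n k) (take (length t - n) t @ rotate k' [0..<n] @ Dp n k)"
      by (rule sn_rot[OF k'(1)])
    then have "sn_eq n (t @ Dp n k) (take (length t - n) t @ Dp n (Suc k))"
      using k'(2) tt by (metis Dp_simps(2) append.assoc sn_eq.sym)
    then have "sn_eq n (w @ [a]) (nf n (w @ [a]) @ Dp n (Suc k))"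
      using e1 nfs True by (auto simp: step_def t_def intro: sn_eq.trans)
    moreover have "length (w @ [a]) = length (nf n (w @ [a])) + Suc k * n"
      using nfs True k(2) ln by (simp add: step_def t_def)
    ultimately show ?thesis by blast
  qed
qed

lemma cancel_Dp:
  assumes n: "0 < n" and u: "set u \<subseteq> {0..<n}" and v: "set v \<subseteq> {0..<n}"
    and e: "sn_eq n (u @ Dp n k) (v @ Dp n k)"
  shows "sn_eq n u v"
proof -
  have nfe: "nf n u = nf n v" using nf_sn[OF e] nf_Dp[OF n] by simp
  have le: "length u = length v" using sn_length[OF e] by simp
  obtain a where a: "sn_eq n u (nf n u @ Dp n a)" "length u = length (nf n u) + a * n"
    using nf_decomp[OF u] by blast
  obtain b where b: "sn_eq n v (nf n v @ Dp n b)" "length v = length (nf n v) + b * n"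
    using nf_decomp[OF v] by blast
  have "length (nf n u) = length (nf n v)" using nfe by simp
  then have "a * n = b * n" using a(2) b(2) le by linarith
  then have "a = b" using n by simp
  then show ?thesis using a b nfe by (metis sn_eq.sym sn_eq.trans)
qed



lemma weval_Nil[simp]: "weval G x [] = \<one>\<^bsub>G\<^esub>" by (simp add: weval_def)
lemma weval_Cons[simp]: "weval G x (a # w) = x a \<otimes>\<^bsub>G\<^esub> weval G x w" by (simp add: weval_def)

lemma weval_carrier: "group G \<Longrightarrow> (\<And>i. x i \<in> carrier G) \<Longrightarrow> weval G x w \<in> carrier G"
  by (induction w) (auto intro: group.is_monoid monoid.m_closed monoid.one_closed)

lemma weval_append: "group G \<Longrightarrow> (\<And>i. x i \<in> carrier G) \<Longrightarrow>
    weval G x (u @ v) = weval G x u \<otimes>\<^bsub>G\<^esub> weval G x v"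
proof (induction u)
  case Nil then show ?case using weval_carrier[of G x v] by (simp add: group.is_monoid monoid.l_one)
next
  case (Cons a u)
  then show ?case using weval_carrier[of G x u] weval_carrier[of G x v]
    by (simp add: group.is_monoid monoid.m_assoc)
qed

lemma comm_swap:
  fixes G (structure)
  assumes G: "group G" and a: "a \<in> carrier G" and b: "b \<in> carrier G"
    and ab: "a \<otimes> b = z" and za: "z \<otimes> a = a \<otimes> z"
  shows "b \<otimes> a = z"
proof -
  interpret group G by (rule G)
  have z: "z \<in> carrier G" using ab a b by auto
  have "b = inv a \<otimes> z" using ab a b z by (simp add: inv_solve_left)
  then have "b \<otimes> a = inv a \<otimes> (z \<otimes> a)" using a z by (simp add: m_assoc)
  also have "\<dots> = inv a \<otimes> (a \<otimes> z)" using za by simp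
  also have "\<dots> = z" using a z by (simp add: m_assoc[symmetric])
  finally show ?thesis .
qed

definition Pw :: "nat \<Rightarrow> int list" where "Pw n = map int [1..<n]"

definition xg :: "nat \<Rightarrow> nat \<Rightarrow> int list \<times> int" where
  "xg n i = (if i < n - 1 then ([int i + 1], 0) else if i = n - 1 then (ginv (Pw n), 1) else ([], 0))"

lemma red_pos: "\<forall>l\<in>set g. 0 < l \<Longrightarrow> red g"
  by (induction g rule: red.induct) auto

lemma red_neg: "\<forall>l\<in>set g. l < 0 \<Longrightarrow> red g"
  by (induction g rule: red.induct) auto

lemma Pw_Wc: "Pw n \<in> Wc n"
  by (auto simp: Pw_def Wc_def Ls_def intro!: red_pos)

lemma ginvPw_Wc: "ginv (Pw n) \<in> Wc n"
  by (auto simp: Pw_def Wc_def Ls_def ginv_def intro!: red_neg)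

lemma xg_carrier: "xg n i \<in> carrier (Gp n)"
  using ginvPw_Wc by (auto simp: xg_def Wc_def Ls_def)

lemma ginv_ginv[simp]: "ginv (ginv g) = g" by (simp add: ginv_def rev_map)

lemma E_g_ginv: "red (ginv g) \<Longrightarrow> E g (ginv g) = []"
  using E_ginv[of "[]" "ginv g"] E_nil[of "ginv g"] by simp

lemma weval_prefix: "k \<le> n - 1 \<Longrightarrow> weval (Gp n) (xg n) [0..<k] = (Pw (Suc k), 0)"
proof (induction k)
  case 0 then show ?case by (simp add: Pw_def)
next
  case (Suc k)
  have "weval (Gp n) (xg n) [0..<Suc k] = (Pw (Suc k), 0) \<otimes>\<^bsub>Gp n\<^esub> weval (Gp n) (xg n) [k]"
    using Suc weval_append[OF group_Gp[of n], where x="xg n" and u="[0..<k]" and v="[k]"] xg_carrier by simp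
  also have "\<dots> = (E (Pw (Suc k)) [int k + 1], 0)" using Suc.prems by (simp add: xg_def)
  also have "\<dots> = (Pw (Suc k) @ [int k + 1], 0)"
    by (subst E_append) (auto simp: Pw_def intro!: red_pos)
  also have "\<dots> = (Pw (Suc (Suc k)), 0)" by (simp add: Pw_def)
  finally show ?case .
qed

lemma weval_D: "2 \<le> n \<Longrightarrow> weval (Gp n) (xg n) [0..<n] = ([], 1)"
proof -
  assume n: "2 \<le> n"
  have e: "[0..<n] = [0..<n-1] @ [n-1]" using n
    by (metis Suc_diff_1 less_le_trans pos2 upt_Suc_append zero_le)
  have "weval (Gp n) (xg n) [0..<n] = (Pw n, 0) \<otimes>\<^bsub>Gp n\<^esub> (ginv (Pw n), 1)"
    using weval_append[OF group_Gp[of n], where x="xg n" and u="[0..<n-1]" and v="[n-1]"] xg_carrier weval_prefix[of "n-1" n] n e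
      ginvPw_Wc[of n] E_nil[of "ginv (Pw n)"]
    by (simp add: xg_def Wc_def)
  also have "\<dots> = ([], 1)" using ginvPw_Wc[of n] E_nil[of "ginv (Pw n)"] E_g_ginv[of "Pw n"] by (simp add: Wc_def)
  finally show ?thesis .
qed

lemma Delta_central: "x \<in> carrier (Gp n) \<Longrightarrow> ([], 1) \<otimes>\<^bsub>Gp n\<^esub> x = x \<otimes>\<^bsub>Gp n\<^esub> ([], 1)"
  by (cases x) (auto simp: E_nil Wc_def)

lemma weval_rot: "2 \<le> n \<Longrightarrow> k < n \<Longrightarrow> weval (Gp n) (xg n) (rotate k [0..<n]) = ([], 1)"
proof -
  assume n: "2 \<le> n" and k: "k < n"
  let ?W = "weval (Gp n) (xg n)"
  have r: "rotate k [0..<n] = drop k [0..<n] @ take k [0..<n]" using k by (simp add: rotate_drop_take)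
  have "?W (take k [0..<n] @ drop k [0..<n]) = ?W (take k [0..<n]) \<otimes>\<^bsub>Gp n\<^esub> ?W (drop k [0..<n])"
    by (rule weval_append[OF group_Gp xg_carrier])
  then have "?W (take k [0..<n]) \<otimes>\<^bsub>Gp n\<^esub> ?W (drop k [0..<n]) = ([], 1)"
    using weval_D[OF n] by (simp only: append_take_drop_id)
  moreover have c1: "?W (take k [0..<n]) \<in> carrier (Gp n)" by (rule weval_carrier[OF group_Gp xg_carrier])
  moreover have c2: "?W (drop k [0..<n]) \<in> carrier (Gp n)" by (rule weval_carrier[OF group_Gp xg_carrier])
  moreover have "([], 1) \<otimes>\<^bsub>Gp n\<^esub> ?W (take k [0..<n]) = ?W (take k [0..<n]) \<otimes>\<^bsub>Gp n\<^esub> ([], 1)"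
    using c1 by (rule Delta_central)
  ultimately have "?W (drop k [0..<n]) \<otimes>\<^bsub>Gp n\<^esub> ?W (take k [0..<n]) = ([], 1)"
    using comm_swap[OF group_Gp] by blast
  moreover have "?W (drop k [0..<n] @ take k [0..<n]) = ?W (drop k [0..<n]) \<otimes>\<^bsub>Gp n\<^esub> ?W (take k [0..<n])"
    by (rule weval_append[OF group_Gp xg_carrier])
  ultimately show ?thesis using r by (simp only:)
qed



definition Rw :: "nat \<Rightarrow> nat \<Rightarrow> nat list" where "Rw n j = [Suc j..<n] @ [0..<j]"

lemma jRw: "j < n \<Longrightarrow> [j] @ Rw n j = rotate j [0..<n]"
proof -
  assume j: "j < n"
  have "rotate j [0..<n] = [j..<n] @ [0..<j]" using rotate_D[of j n] j by simp
  moreover have "[j..<n] = j # [Suc j..<n]" using j upt_conv_Cons by blast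
  ultimately show ?thesis by (simp add: Rw_def)
qed

lemma Rwj: "j < n \<Longrightarrow> Rw n j @ [j] = rotate (Suc j) [0..<n]"
proof -
  assume j: "j < n"
  have "rotate (Suc j) [0..<n] = [Suc j..<n] @ [0..<Suc j]" using rotate_D[of "Suc j" n] j by simp
  then show ?thesis by (simp add: Rw_def)
qed

lemma set_Rw: "j < n \<Longrightarrow> set (Rw n j) \<subseteq> {0..<n}" by (auto simp: Rw_def)

lemma weval_Rw: assumes n: "2 \<le> n" and j: "j < n - 1"
  shows "weval (Gp n) (xg n) (Rw n j) = ([- (int j + 1)], 1)"
proof -
  let ?W = "weval (Gp n) (xg n)"
  interpret group "Gp n" by (rule group_Gp)
  have jn: "j < n" using j by simp
  have "?W ([j] @ Rw n j) = ([], 1)" using jRw[OF jn] weval_rot[OF n jn] by simp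
  then have "xg n j \<otimes>\<^bsub>Gp n\<^esub> ?W (Rw n j) = ([], 1)"
    using weval_append[OF group_Gp[of n] xg_carrier[of n], where u="[j]" and v="Rw n j"] xg_carrier[of n j]
    by simp
  then have "?W (Rw n j) = inv\<^bsub>Gp n\<^esub> (xg n j) \<otimes>\<^bsub>Gp n\<^esub> ([], 1)"
    using inv_solve_left[where a="?W (Rw n j)" and b="xg n j" and c="([], 1)"] xg_carrier[of n j]
      weval_carrier[OF group_Gp[of n] xg_carrier[of n], where w="Rw n j"] by (auto simp: Wc_def)
  also have "\<dots> = ([- (int j + 1)], 1)"
    using j inv_Gp[of "[int j + 1]" n 0] by (simp add: xg_def Wc_def Ls_def ginv_def)
  finally show ?thesis .
qed

definition tr :: "nat \<Rightarrow> int \<Rightarrow> nat list" where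
  "tr n l = (if 0 < l then [nat l - 1] else Rw n (nat (- l) - 1))"

definition c0 :: "nat \<Rightarrow> int list \<Rightarrow> nat list" where
  "c0 n g = concat (map (tr n) g)"

definition mneg :: "int list \<Rightarrow> nat" where
  "mneg g = length (filter (\<lambda>l. l < 0) g)"

lemma c0_Cons[simp]: "c0 n (l # g) = tr n l @ c0 n g" by (simp add: c0_def)
lemma c0_Nil[simp]: "c0 n [] = []" by (simp add: c0_def)

lemma set_c0: "set g \<subseteq> Ls n \<Longrightarrow> set (c0 n g) \<subseteq> {0..<n}"
proof (induction g)
  case (Cons l g)
  then have l: "l \<noteq> 0" "\<bar>l\<bar> < int n" by (auto simp: Ls_def)
  have "set (tr n l) \<subseteq> {0..<n}"
  proof (cases "0 < l")
    case True then show ?thesis using l by (auto simp: tr_def)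
  next
    case False
    then have "nat (- l) - 1 < n" using l by linarith
    then show ?thesis using False set_Rw[of "nat (- l) - 1" n] by (simp add: tr_def)
  qed
  then show ?case using Cons by auto
qed simp

definition Rep :: "nat \<Rightarrow> nat list \<Rightarrow> int list \<Rightarrow> int \<Rightarrow> bool" where
  "Rep n w g e \<longleftrightarrow> (\<exists>p q. sn_eq n (w @ Dp n p) (c0 n g @ Dp n q) \<and> e + int p = int (mneg g) + int q)"

lemma rot_collapse:
  assumes k: "k < n" and g: "set g \<subseteq> Ls n"
  shows "sn_eq n (rotate k [0..<n] @ c0 n g @ Dp n q) (c0 n g @ Dp n (Suc q))"
proof -
  have "sn_eq n (rotate k [0..<n] @ c0 n g @ Dp n q) ([0..<n] @ c0 n g @ Dp n q)"
    using sn_eq.sym[OF sn_rot[OF k, of "[]" "c0 n g @ Dp n q"]] by simp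
  moreover have "sn_eq n ([0..<n] @ c0 n g @ Dp n q) (c0 n g @ [0..<n] @ Dp n q)"
    using sn_appR[OF sn_eq.sym[OF word_comm[OF set_c0[OF g]]], of "Dp n q"] by simp
  ultimately show ?thesis by (simp add: sn_eq.trans)
qed

lemma L1:
  assumes j: "j < n - 1" and R: "Rep n w g e" and g: "set g \<subseteq> Ls n"
  shows "Rep n (j # w) (act (int j + 1) g) e"
proof -
  obtain p q where pq: "sn_eq n (w @ Dp n p) (c0 n g @ Dp n q)" "e + int p = int (mneg g) + int q"
    using R by (auto simp: Rep_def)
  have s1: "sn_eq n ((j # w) @ Dp n p) ([j] @ c0 n g @ Dp n q)"
    using sn_appL[OF pq(1), of "[j]"] by simp
  show ?thesis
  proof (cases "\<exists>g'. g = (- (int j + 1)) # g'")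
    case True
    then obtain g' where g': "g = (- (int j + 1)) # g'" by blast
    have tr: "tr n (- (int j + 1)) = Rw n j" by (simp add: tr_def nat_add_distrib)
    have eq: "[j] @ c0 n g @ Dp n q = rotate j [0..<n] @ c0 n g' @ Dp n q"
      using jRw[of j n] j g' tr by simp
    have "sn_eq n ([j] @ c0 n g @ Dp n q) (c0 n g' @ Dp n (Suc q))"
      unfolding eq by (rule rot_collapse) (use j g g' in auto)
    then have "sn_eq n ((j # w) @ Dp n p) (c0 n g' @ Dp n (Suc q))" using s1 sn_eq.trans by blast
    moreover have "act (int j + 1) g = g'" using g' by simp
    moreover have "mneg g = Suc (mneg g')" using g' by (simp add: mneg_def)
    ultimately show ?thesis using pq(2) unfolding Rep_def by (intro exI[of _ p] exI[of _ "Suc q"]) auto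
  next
    case False
    then have a: "act (int j + 1) g = (int j + 1) # g" by (cases g) auto
    have "tr n (int j + 1) = [j]" by (simp add: tr_def)
    then show ?thesis using s1 pq(2) a unfolding Rep_def
      by (intro exI[of _ p] exI[of _ q]) (auto simp: mneg_def)
  qed
qed

lemma L2:
  assumes j: "j < n - 1" and R: "Rep n w g e" and g: "set g \<subseteq> Ls n"
  shows "Rep n (Rw n j @ w) (act (- (int j + 1)) g) (e + 1)"
proof -
  obtain p q where pq: "sn_eq n (w @ Dp n p) (c0 n g @ Dp n q)" "e + int p = int (mneg g) + int q"
    using R by (auto simp: Rep_def)
  have s1: "sn_eq n ((Rw n j @ w) @ Dp n p) (Rw n j @ c0 n g @ Dp n q)"
    using sn_appL[OF pq(1), of "Rw n j"] by simp
  show ?thesis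
  proof (cases "\<exists>g'. g = (int j + 1) # g'")
    case True
    then obtain g' where g': "g = (int j + 1) # g'" by blast
    have tr: "tr n (int j + 1) = [j]" by (simp add: tr_def)
    have eq: "Rw n j @ c0 n g @ Dp n q = rotate (Suc j) [0..<n] @ c0 n g' @ Dp n q"
      using Rwj[of j n] j g' tr by simp
    have "sn_eq n (Rw n j @ c0 n g @ Dp n q) (c0 n g' @ Dp n (Suc q))"
      unfolding eq by (rule rot_collapse) (use j g g' in auto)
    then have "sn_eq n ((Rw n j @ w) @ Dp n p) (c0 n g' @ Dp n (Suc q))" using s1 sn_eq.trans by blast
    moreover have "act (- (int j + 1)) g = g'" using g' by simp
    moreover have "mneg g = mneg g'" using g' by (simp add: mneg_def)
    ultimately show ?thesis using pq(2) unfolding Rep_def by (intro exI[of _ p] exI[of _ "Suc q"]) auto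
  next
    case False
    then have a: "act (- (int j + 1)) g = (- (int j + 1)) # g" by (cases g) auto
    have "tr n (- (int j + 1)) = Rw n j" by (simp add: tr_def nat_add_distrib)
    then show ?thesis using s1 pq(2) a unfolding Rep_def
      by (intro exI[of _ p] exI[of _ q]) (auto simp: mneg_def)
  qed
qed



fun negs :: "nat \<Rightarrow> int list" where
  "negs 0 = []"
| "negs (Suc k) = (- int (Suc k)) # negs k"

fun Tw :: "nat \<Rightarrow> nat \<Rightarrow> nat list" where
  "Tw n 0 = []"
| "Tw n (Suc k) = Rw n k @ Tw n k"

lemma iter:
  assumes "k \<le> n - 1" and R: "Rep n w g e" and g: "set g \<subseteq> Ls n"
  shows "Rep n (Tw n k @ w) (E (negs k) g) (e + int k) \<and> set (E (negs k) g) \<subseteq> Ls n"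
  using assms(1)
proof (induction k)
  case 0 then show ?case using R g by simp
next
  case (Suc k)
  then have IH: "Rep n (Tw n k @ w) (E (negs k) g) (e + int k)" "set (E (negs k) g) \<subseteq> Ls n" by auto
  have k: "k < n - 1" using Suc.prems by simp
  have "Rep n (Rw n k @ Tw n k @ w) (act (- (int k + 1)) (E (negs k) g)) (e + int k + 1)"
    by (rule L2[OF k IH])
  moreover have "set (act (- (int k + 1)) (E (negs k) g)) \<subseteq> Ls n"
    using set_act[of "- (int k + 1)" "E (negs k) g"] IH(2) k by (auto simp: Ls_def)
  ultimately show ?case by (simp add: add.commute add.left_commute)
qed

lemma Tw_lit: "1 \<le> k \<Longrightarrow> k \<le> n \<Longrightarrow> Tw n k = [k..<n] @ Dp n (k - 1)"
proof (induction k)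
  case 0 then show ?case by simp
next
  case (Suc k)
  show ?case
  proof (cases "k = 0")
    case True then show ?thesis by (simp add: Rw_def)
  next
    case False
    then have IH: "Tw n k = [k..<n] @ Dp n (k - 1)" using Suc by simp
    have "[0..<k] @ [k..<n] = [0..<n]" using Suc.prems upt_add_eq_append[of 0 k "n - k"] by simp
    moreover have "Dp n k = [0..<n] @ Dp n (k - 1)" using False by (cases k) auto
    ultimately show ?thesis using IH by (simp add: Rw_def)
  qed
qed

lemma ginvPw_negs: "ginv (Pw (Suc k)) = negs k"
proof (induction k)
  case 0 then show ?case by (simp add: Pw_def ginv_def)
next
  case (Suc k)
  have "Pw (Suc (Suc k)) = Pw (Suc k) @ [int (Suc k)]" by (simp add: Pw_def)
  then show ?case using Suc by (simp add: ginv_def)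
qed

lemma shift:
  assumes R: "Rep n (u @ Dp n k @ w) g (e + int k)" and w: "set w \<subseteq> {0..<n}"
  shows "Rep n (u @ w) g e"
proof -
  obtain p q where pq: "sn_eq n ((u @ Dp n k @ w) @ Dp n p) (c0 n g @ Dp n q)" "e + int k + int p = int (mneg g) + int q"
    using R by (auto simp: Rep_def)
  have "sn_eq n (u @ (w @ Dp n k) @ Dp n p) (u @ (Dp n k @ w) @ Dp n p)"
    by (rule sn_app[OF word_commDp[OF w]])
  then have "sn_eq n ((u @ w) @ Dp n (k + p)) (c0 n g @ Dp n q)"
    using pq(1) by (simp add: Dp_add) (metis append.assoc sn_eq.trans)
  then show ?thesis using pq(2) unfolding Rep_def by (intro exI[of _ "k + p"] exI[of _ q]) auto
qed

lemma main_rep: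
  assumes n: "2 \<le> n" and w: "set w \<subseteq> {0..<n}"
  shows "Rep n w (fst (weval (Gp n) (xg n) w)) (snd (weval (Gp n) (xg n) w))"
  using w
proof (induction w)
  case Nil then show ?case by (auto simp: Rep_def mneg_def intro!: exI[of _ 0] sn_eq.refl)
next
  case (Cons j w)
  obtain g e where ge: "weval (Gp n) (xg n) w = (g, e)" by fastforce
  have "weval (Gp n) (xg n) w \<in> carrier (Gp n)" by (rule weval_carrier[OF group_Gp xg_carrier])
  then have gc: "g \<in> Wc n" using ge by simp
  then have gL: "set g \<subseteq> Ls n" and gr: "red g" by (auto simp: Wc_def)
  have R: "Rep n w g e" using Cons ge by simp
  have j: "j < n" "set w \<subseteq> {0..<n}" using Cons.prems by auto
  show ?case
  proof (cases "j < n - 1")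
    case True
    then have "weval (Gp n) (xg n) (j # w) = (act (int j + 1) g, e)" using ge by (simp add: xg_def)
    then show ?thesis using L1[OF True R gL] by simp
  next
    case False
    then have jn: "j = n - 1" using j by simp
    have "weval (Gp n) (xg n) (j # w) = (E (negs (n - 1)) g, 1 + e)"
      using ge jn ginvPw_negs[of "n - 1"] n by (simp add: xg_def)
    moreover have "Rep n (Tw n (n - 1) @ w) (E (negs (n - 1)) g) (e + int (n - 1))"
      using iter[OF _ R gL, of "n - 1"] by simp
    moreover have "Tw n (n - 1) = [n - 1] @ Dp n (n - 2)"
      using Tw_lit[of "n - 1" n] n upt_conv_Cons[of "n - 1" n] by (simp add: numeral_2_eq_2)
    moreover have "e + int (n - 1) = (1 + e) + int (n - 2)" using n by simp
    ultimately have "Rep n ([n - 1] @ Dp n (n - 2) @ w) (E (negs (n - 1)) g) ((1 + e) + int (n - 2))"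
      and ev: "weval (Gp n) (xg n) (j # w) = (E (negs (n - 1)) g, 1 + e)"
      by (simp_all only: append.assoc)
    then have "Rep n ([n - 1] @ w) (E (negs (n - 1)) g) (1 + e)" using shift j(2) by blast
    then show ?thesis using ev jn by simp
  qed
qed

lemma sn_weval: "sn_eq n u v \<Longrightarrow> 2 \<le> n \<Longrightarrow> weval (Gp n) (xg n) u = weval (Gp n) (xg n) v"
proof (induction rule: sn_eq.induct)
  case (rel u v p q)
  then obtain k where k: "k < n" "u = [0..<n]" "v = rotate k [0..<n]" by (auto simp: sn_rel_def)
  have "weval (Gp n) (xg n) u = weval (Gp n) (xg n) v"
    using weval_D[OF rel.prems] weval_rot[OF rel.prems k(1)] k by simp
  then show ?case by (simp add: weval_append[OF group_Gp xg_carrier])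
qed auto

lemma injective:
  assumes n: "2 \<le> n" and u: "set u \<subseteq> {0..<n}" and v: "set v \<subseteq> {0..<n}"
    and e: "weval (Gp n) (xg n) u = weval (Gp n) (xg n) v"
  shows "sn_eq n u v"
proof -
  obtain g e where ge: "weval (Gp n) (xg n) u = (g, e)" by fastforce
  have Ru: "Rep n u g e" using main_rep[OF n u] ge by simp
  have Rv: "Rep n v g e" using main_rep[OF n v] ge e by simp
  obtain p q where pq: "sn_eq n (u @ Dp n p) (c0 n g @ Dp n q)" "e + int p = int (mneg g) + int q"
    using Ru by (auto simp: Rep_def)
  obtain p' q' where pq': "sn_eq n (v @ Dp n p') (c0 n g @ Dp n q')" "e + int p' = int (mneg g) + int q'"
    using Rv by (auto simp: Rep_def)
  have N: "p + q' = p' + q" using pq(2) pq'(2) by linarith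
  have a: "sn_eq n (u @ Dp n (p + q')) (c0 n g @ Dp n (q + q'))"
    using sn_appR[OF pq(1), of "Dp n q'"] by (simp add: Dp_add)
  have b: "sn_eq n (v @ Dp n (p' + q)) (c0 n g @ Dp n (q + q'))"
    using sn_appR[OF pq'(1), of "Dp n q"] by (simp add: Dp_add add.commute)
  have "sn_eq n (u @ Dp n (p + q')) (v @ Dp n (p + q'))"
    using a b N by (metis sn_eq.sym sn_eq.trans)
  then show ?thesis using cancel_Dp[OF _ u v] n by simp
qed



lemma wapp: "weval (Gp n) (xg n) (u @ v) = weval (Gp n) (xg n) u \<otimes>\<^bsub>Gp n\<^esub> weval (Gp n) (xg n) v"
  by (rule weval_append[OF group_Gp xg_carrier])

lemma wcar: "weval (Gp n) (xg n) w \<in> carrier (Gp n)"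
  by (rule weval_carrier[OF group_Gp xg_carrier])

lemma act_red_cons: "red (l # g) \<Longrightarrow> act l g = l # g"
  by (cases g) auto

lemma weval_c0: assumes n: "2 \<le> n" and g: "g \<in> Wc n"
  shows "weval (Gp n) (xg n) (c0 n g) = (g, int (mneg g))"
  using g
proof (induction g)
  case Nil then show ?case by (simp add: mneg_def)
next
  case (Cons l g)
  have gw: "g \<in> Wc n" using Cons.prems by (auto simp: Wc_def intro: red_tl)
  have rl: "red (l # g)" and l: "l \<noteq> 0" "\<bar>l\<bar> < int n" using Cons.prems by (auto simp: Wc_def Ls_def)
  have ap: "weval (Gp n) (xg n) (c0 n (l # g)) = weval (Gp n) (xg n) (tr n l) \<otimes>\<^bsub>Gp n\<^esub> (g, int (mneg g))"
    using wapp[of n "tr n l" "c0 n g"] Cons.IH[OF gw] by simp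
  show ?case
  proof (cases "0 < l")
    case True
    then have "tr n l = [nat l - 1]" "nat l - 1 < n - 1" using l by (auto simp: tr_def)
    then have "weval (Gp n) (xg n) (tr n l) = ([l], 0)" using True by (simp add: xg_def)
    then show ?thesis using ap act_red_cons[OF rl] True by (simp add: mneg_def)
  next
    case False
    then have "tr n l = Rw n (nat (- l) - 1)" "nat (- l) - 1 < n - 1" using l by (auto simp: tr_def)
    then have "weval (Gp n) (xg n) (tr n l) = ([l], 1)" using weval_Rw[OF n] False l by simp
    then show ?thesis using ap act_red_cons[OF rl] False l by (simp add: mneg_def)
  qed
qed

lemma weval_Dp: "2 \<le> n \<Longrightarrow> weval (Gp n) (xg n) (Dp n k) = ([], int k)"
proof (induction k)
  case (Suc k)
  then show ?case using wapp[of n "[0..<n]" "Dp n k"] weval_D[OF Suc.prems]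
    by simp
qed simp

lemma pow_Delta: "([], 1) [^]\<^bsub>Gp n\<^esub> (k::nat) = ([], int k)"
  by (induction k) auto

lemma carrier_eq:
  assumes n: "2 \<le> n"
  shows "carrier (Gp n) = {weval (Gp n) (xg n) w \<otimes>\<^bsub>Gp n\<^esub> inv\<^bsub>Gp n\<^esub> (weval (Gp n) (xg n) [0..<n] [^]\<^bsub>Gp n\<^esub> k) | w k.
                          w \<in> sn_words n \<and> (k :: nat) \<ge> 0}"
proof
  interpret group "Gp n" by (rule group_Gp)
  show "carrier (Gp n) \<subseteq> {weval (Gp n) (xg n) w \<otimes>\<^bsub>Gp n\<^esub> inv\<^bsub>Gp n\<^esub> (weval (Gp n) (xg n) [0..<n] [^]\<^bsub>Gp n\<^esub> k) | w k.
                          w \<in> sn_words n \<and> (k :: nat) \<ge> 0}"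
  proof
    fix z assume "z \<in> carrier (Gp n)"
    then obtain g e where z: "z = (g, e)" "g \<in> Wc n" by auto
    define w where "w = c0 n g @ Dp n (nat e)"
    define k where "k = mneg g + nat (- e)"
    have ws: "w \<in> sn_words n" using set_c0[of g n] set_Dp[of n "nat e"] z(2)
      by (auto simp: w_def sn_words_def Wc_def)
    have "weval (Gp n) (xg n) w = (g, int (mneg g)) \<otimes>\<^bsub>Gp n\<^esub> ([], int (nat e))"
      unfolding w_def using wapp[of n "c0 n g" "Dp n (nat e)"]
        weval_c0[OF n z(2)] weval_Dp[OF n] by simp
    also have "\<dots> = (g, int (mneg g) + int (nat e))" using z(2) by (simp add: E_nil Wc_def)
    finally have e1: "weval (Gp n) (xg n) w = (g, int (mneg g) + int (nat e))" .
    have e2: "inv\<^bsub>Gp n\<^esub> (weval (Gp n) (xg n) [0..<n] [^]\<^bsub>Gp n\<^esub> k) = ([], - int k)"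
      using weval_D[OF n] pow_Delta[of n k] inv_Gp[of "[]" n "int k"] by (simp add: Wc_def ginv_def)
    have "weval (Gp n) (xg n) w \<otimes>\<^bsub>Gp n\<^esub> inv\<^bsub>Gp n\<^esub> (weval (Gp n) (xg n) [0..<n] [^]\<^bsub>Gp n\<^esub> k) = z"
      unfolding e1 e2 using z by (simp add: E_nil Wc_def k_def)
    then show "z \<in> {weval (Gp n) (xg n) w \<otimes>\<^bsub>Gp n\<^esub> inv\<^bsub>Gp n\<^esub> (weval (Gp n) (xg n) [0..<n] [^]\<^bsub>Gp n\<^esub> k) | w k.
                          w \<in> sn_words n \<and> (k :: nat) \<ge> 0}" using ws by blast
  qed
next
  interpret group "Gp n" by (rule group_Gp)
  show "{weval (Gp n) (xg n) w \<otimes>\<^bsub>Gp n\<^esub> inv\<^bsub>Gp n\<^esub> (weval (Gp n) (xg n) [0..<n] [^]\<^bsub>Gp n\<^esub> k) | w k.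
                          w \<in> sn_words n \<and> (k :: nat) \<ge> 0} \<subseteq> carrier (Gp n)"
  proof
    fix z assume "z \<in> {weval (Gp n) (xg n) w \<otimes>\<^bsub>Gp n\<^esub> inv\<^bsub>Gp n\<^esub> (weval (Gp n) (xg n) [0..<n] [^]\<^bsub>Gp n\<^esub> k) | w k.
                          w \<in> sn_words n \<and> (k :: nat) \<ge> 0}"
    then obtain w k where "z = weval (Gp n) (xg n) w \<otimes>\<^bsub>Gp n\<^esub> inv\<^bsub>Gp n\<^esub> (weval (Gp n) (xg n) [0..<n] [^]\<^bsub>Gp n\<^esub> (k::nat))"
      by blast
    then show "z \<in> carrier (Gp n)" by (metis wcar m_closed inv_closed nat_pow_closed)
  qed
qed



definition Fset :: "nat \<Rightarrow> (int list \<times> int) set" where "Fset n = {(g, 0) | g. g \<in> Wc n}"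
definition Cset :: "(int list \<times> int) set" where "Cset = {([], e) | e. True}"

lemma xg_low: "i < n - 1 \<Longrightarrow> xg n i = ([int i + 1], 0)" by (simp add: xg_def)

lemma inv_letter: "l \<noteq> 0 \<Longrightarrow> \<bar>l\<bar> < int n \<Longrightarrow> inv\<^bsub>Gp n\<^esub> ([l], 0) = ([- l], 0)"
  using inv_Gp[of "[l]" n 0] by (simp add: Wc_def Ls_def ginv_def)

lemma F_eq: "generate (Gp n) (xg n ` {0..<n - 1}) = Fset n"
proof
  show "generate (Gp n) (xg n ` {0..<n - 1}) \<subseteq> Fset n"
  proof
    fix z assume "z \<in> generate (Gp n) (xg n ` {0..<n - 1})"
    then show "z \<in> Fset n"
    proof (induction rule: generate.induct)
      case one then show ?case by (auto simp: Fset_def Wc_def)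
    next
      case (incl h) then show ?case by (auto simp: Fset_def Wc_def Ls_def xg_low)
    next
      case (inv h)
      then obtain i where i: "i < n - 1" "h = ([int i + 1], 0)" by (auto simp: xg_low)
      then show ?case using inv_letter[of "int i + 1" n] by (auto simp: Fset_def Wc_def Ls_def)
    next
      case (eng h1 h2) then show ?case by (auto simp: Fset_def intro: Wc_E)
    qed
  qed
next
  show "Fset n \<subseteq> generate (Gp n) (xg n ` {0..<n - 1})"
  proof
    fix z assume "z \<in> Fset n"
    then obtain g where z: "z = (g, 0)" "g \<in> Wc n" by (auto simp: Fset_def)
    have "(g, 0) \<in> generate (Gp n) (xg n ` {0..<n - 1})" using z(2)
    proof (induction g)
      case Nil then show ?case using generate.one[of "Gp n"] by simp
    next
      case (Cons l g)
      have gw: "g \<in> Wc n" using Cons.prems by (auto simp: Wc_def intro: red_tl)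
      have rl: "red (l # g)" and l: "l \<noteq> 0" "\<bar>l\<bar> < int n" using Cons.prems by (auto simp: Wc_def Ls_def)
      have lg: "([l], 0) \<in> generate (Gp n) (xg n ` {0..<n - 1})"
      proof (cases "0 < l")
        case True
        then have "([l], 0) = xg n (nat l - 1)" "nat l - 1 \<in> {0..<n - 1}" using l by (auto simp: xg_low)
        then show ?thesis by (metis generate.incl image_eqI)
      next
        case False
        then have "([- l], 0) = xg n (nat (- l) - 1)" "nat (- l) - 1 \<in> {0..<n - 1}" using l by (auto simp: xg_low)
        then have "inv\<^bsub>Gp n\<^esub> ([- l], 0) \<in> generate (Gp n) (xg n ` {0..<n - 1})"
          by (metis generate.inv image_eqI)
        then show ?thesis using inv_letter[of "- l" n] l by simp
      qed
      have "([l], 0) \<otimes>\<^bsub>Gp n\<^esub> (g, 0) \<in> generate (Gp n) (xg n ` {0..<n - 1})"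
        by (rule generate.eng[OF lg Cons.IH[OF gw]])
      then show ?case using act_red_cons[OF rl] by simp
    qed
    then show "z \<in> generate (Gp n) (xg n ` {0..<n - 1})" using z by simp
  qed
qed

lemma C_eq: "generate (Gp n) {([], 1)} = Cset"
proof
  show "generate (Gp n) {([], 1)} \<subseteq> Cset"
  proof
    fix z assume "z \<in> generate (Gp n) {([], 1)}"
    then show "z \<in> Cset"
    proof (induction rule: generate.induct)
      case (inv h) then show ?case using inv_Gp[of "[]" n 1] by (auto simp: Cset_def Wc_def ginv_def)
    next
      case (eng h1 h2) then show ?case by (auto simp: Cset_def)
    qed (auto simp: Cset_def)
  qed
next
  have pos: "([], int k) \<in> generate (Gp n) {([], 1)}" for k
  proof (induction k)
    case 0 then show ?case using generate.one[of "Gp n"] by simp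
    case (Suc k)
    have "([], 1) \<otimes>\<^bsub>Gp n\<^esub> ([], int k) \<in> generate (Gp n) {([], 1)}"
      by (rule generate.eng[OF generate.incl Suc.IH]) simp
    then show ?case by simp
  qed
  have neg: "([], - int k) \<in> generate (Gp n) {([], 1)}" for k
  proof (induction k)
    case 0 then show ?case using generate.one[of "Gp n"] by simp
    case (Suc k)
    have i: "inv\<^bsub>Gp n\<^esub> ([], 1) = ([], -1)" using inv_Gp[of "[]" n 1] by (simp add: Wc_def ginv_def)
    have "inv\<^bsub>Gp n\<^esub> ([], 1) \<otimes>\<^bsub>Gp n\<^esub> ([], - int k) \<in> generate (Gp n) {([], 1)}"
      by (rule generate.eng[OF generate.inv Suc.IH]) simp
    then show ?case using i by simp
  qed
  show "Cset \<subseteq> generate (Gp n) {([], 1)}"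
  proof
    fix z assume "z \<in> Cset"
    then obtain e where z: "z = ([], e)" by (auto simp: Cset_def)
    show "z \<in> generate (Gp n) {([], 1)}"
    proof (cases "0 \<le> e")
      case True then show ?thesis using pos[of "nat e"] z by simp
    next
      case False then show ?thesis using neg[of "nat (- e)"] z by simp
    qed
  qed
qed

lemma C_infinite: "infinite Cset"
proof
  assume "finite Cset"
  moreover have "inj (\<lambda>e::int. ([]::int list, e))" by (auto intro: injI)
  moreover have "range (\<lambda>e::int. ([]::int list, e)) \<subseteq> Cset" by (auto simp: Cset_def)
  ultimately show False by (meson finite_imageD finite_subset infinite_UNIV_int)
qed

lemma iso_FC: "Gp n \<cong> DirProd (Gp n\<lparr>carrier := Fset n\<rparr>) (Gp n\<lparr>carrier := Cset\<rparr>)"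
proof (rule is_isoI)
  let ?h = "\<lambda>(g, e). ((g, 0::int), ([]::int list, e))"
  show "?h \<in> iso (Gp n) (DirProd (Gp n\<lparr>carrier := Fset n\<rparr>) (Gp n\<lparr>carrier := Cset\<rparr>))"
    unfolding iso_def hom_def
  proof (intro CollectI conjI)
    show "?h \<in> carrier (Gp n) \<rightarrow> carrier (Gp n\<lparr>carrier := Fset n\<rparr> \<times>\<times> Gp n\<lparr>carrier := Cset\<rparr>)"
      by (auto simp: DirProd_def Fset_def Cset_def)
    show "\<forall>x\<in>carrier (Gp n). \<forall>y\<in>carrier (Gp n). ?h (x \<otimes>\<^bsub>Gp n\<^esub> y) =
        ?h x \<otimes>\<^bsub>Gp n\<lparr>carrier := Fset n\<rparr> \<times>\<times> Gp n\<lparr>carrier := Cset\<rparr>\<^esub> ?h y"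
      by (auto simp: DirProd_def)
    show "bij_betw ?h (carrier (Gp n)) (carrier (Gp n\<lparr>carrier := Fset n\<rparr> \<times>\<times> Gp n\<lparr>carrier := Cset\<rparr>))"
      unfolding bij_betw_def
    proof
      show "inj_on ?h (carrier (Gp n))" by (auto intro!: inj_onI)
      show "?h ` carrier (Gp n) = carrier (Gp n\<lparr>carrier := Fset n\<rparr> \<times>\<times> Gp n\<lparr>carrier := Cset\<rparr>)"
        by (auto simp: DirProd_def Fset_def Cset_def image_iff)
    qed
  qed
qed



lemma red_iff: "red g \<longleftrightarrow> (\<forall>i. Suc i < length g \<longrightarrow> g ! Suc i \<noteq> - (g ! i))"
proof (induction g rule: red.induct)
  case (3 a b w)
  show ?case
  proof
    assume "red (a # b # w)"
    then show "\<forall>i. Suc i < length (a # b # w) \<longrightarrow> (a # b # w) ! Suc i \<noteq> - ((a # b # w) ! i)"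
      using 3 by (auto simp: less_Suc_eq_0_disj)
  next
    assume h: "\<forall>i. Suc i < length (a # b # w) \<longrightarrow> (a # b # w) ! Suc i \<noteq> - ((a # b # w) ! i)"
    then have "b \<noteq> - a" by (metis length_Cons nth_Cons_0 nth_Cons_Suc zero_less_Suc Suc_less_eq)
    moreover have "\<forall>i. Suc i < length (b # w) \<longrightarrow> (b # w) ! Suc i \<noteq> - ((b # w) ! i)"
      using h by (metis length_Cons nth_Cons_Suc Suc_less_eq)
    ultimately show "red (a # b # w)" using 3 by simp
  qed
qed auto

definition lt :: "((int list \<times> int) \<times> bool) \<Rightarrow> int" where
  "lt p = (if snd p then hd (fst (fst p)) else - hd (fst (fst p)))"

lemma lt_simp: "lt (h, b) = (if b then hd (fst h) else - hd (fst h))" by (simp add: lt_def)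

lemma prod_eq:
  assumes "fst ` set ws \<subseteq> xg n ` {0..<n - 1}"
  shows "foldr (\<lambda>(g, b) acc. (if b then g else inv\<^bsub>Gp n\<^esub> g) \<otimes>\<^bsub>Gp n\<^esub> acc) ws \<one>\<^bsub>Gp n\<^esub>
         = (E (map lt ws) [], 0)"
  using assms
proof (induction ws)
  case Nil then show ?case by simp
next
  case (Cons p ws)
  obtain h b where p: "p = (h, b)" by fastforce
  obtain i where i: "i < n - 1" "h = ([int i + 1], 0)" using Cons.prems p by (auto simp: xg_low)
  have IH: "foldr (\<lambda>(g, b) acc. (if b then g else inv\<^bsub>Gp n\<^esub> g) \<otimes>\<^bsub>Gp n\<^esub> acc) ws \<one>\<^bsub>Gp n\<^esub> = (E (map lt ws) [], 0)"
    using Cons by auto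
  have iv: "inv\<^bsub>Gp n\<^esub> h = ([- (int i + 1)], 0)" using i inv_letter[of "int i + 1" n] by simp
  show ?case using IH p i iv by (simp add: lt_simp)
qed

lemma fb: "free_basis (Gp n) (xg n ` {0..<n - 1})"
  unfolding free_basis_def
proof (intro conjI allI impI)
  show "xg n ` {0..<n - 1} \<subseteq> carrier (Gp n)" using xg_carrier by blast
  fix ws :: "((int list \<times> int) \<times> bool) list"
  assume a: "ws \<noteq> [] \<and> fst ` set ws \<subseteq> xg n ` {0..<n - 1} \<and> free_reduced ws"
  have pos: "\<exists>i. fst (ws ! k) = ([int i + 1], 0)" if "k < length ws" for k
  proof -
    have "fst (ws ! k) \<in> xg n ` {0..<n - 1}" using a that by (meson image_subset_iff nth_mem)
    then show ?thesis by (auto simp: xg_low)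
  qed
  have "red (map lt ws)" unfolding red_iff
  proof (intro allI impI)
    fix k assume k: "Suc k < length (map lt ws)"
    obtain i1 where i1: "fst (ws ! k) = ([int i1 + 1], 0)" using pos[of k] k by auto
    obtain i2 where i2: "fst (ws ! Suc k) = ([int i2 + 1], 0)" using pos[of "Suc k"] k by auto
    show "map lt ws ! Suc k \<noteq> - (map lt ws ! k)"
    proof
      assume eq: "map lt ws ! Suc k = - (map lt ws ! k)"
      then have "lt (ws ! Suc k) = - lt (ws ! k)" using k by simp
      then have "i1 = i2 \<and> snd (ws ! k) \<noteq> snd (ws ! Suc k)" using i1 i2
        by (auto simp: lt_def split: if_splits)
      then show False using a k i1 i2 unfolding free_reduced_def by auto
    qed
  qed
  then have "E (map lt ws) [] = map lt ws" by (rule E_nil)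
  then show "foldr (\<lambda>(g, b) acc. (if b then g else inv\<^bsub>Gp n\<^esub> g) \<otimes>\<^bsub>Gp n\<^esub> acc) ws \<one>\<^bsub>Gp n\<^esub> \<noteq> \<one>\<^bsub>Gp n\<^esub>"
    using prod_eq[of ws n] a by simp
qed

lemma card_B: "card (xg n ` {0..<n - 1}) = n - 1"
proof -
  have "inj_on (xg n) {0..<n - 1}" by (auto intro!: inj_onI simp: xg_low)
  then show ?thesis by (simp add: card_image)
qed



theorem theorem2p2:
  fixes n :: nat
  assumes "n \<ge> 3"
  shows "(\<forall>u\<in>sn_words n. \<forall>v\<in>sn_words n. \<forall>w\<in>sn_words n.
            (sn_eq n (u @ w) (v @ w) \<longrightarrow> sn_eq n u v) \<and>
            (sn_eq n (w @ u) (w @ v) \<longrightarrow> sn_eq n u v))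
       \<and> (\<forall>w\<in>sn_words n. sn_eq n (w @ [0..<n]) ([0..<n] @ w))
       \<and> (\<exists>(G :: (int list \<times> int) monoid) (x :: nat \<Rightarrow> int list \<times> int).
            group G \<and> x ` {0..<n} \<subseteq> carrier G
          \<and> (\<forall>u\<in>sn_words n. \<forall>v\<in>sn_words n. weval G x u = weval G x v \<longleftrightarrow> sn_eq n u v)
          \<and> carrier G = {weval G x w \<otimes>\<^bsub>G\<^esub> inv\<^bsub>G\<^esub> (weval G x [0..<n] [^]\<^bsub>G\<^esub> k) | w k.
                          w \<in> sn_words n \<and> (k :: nat) \<ge> 0}
          \<and> (let F = generate G (x ` {0..<n - 1});
                 C = generate G {weval G x [0..<n]}
             in (\<exists>B. B \<subseteq> F \<and> card B = n - 1 \<and> generate G B = F \<and> free_basis G B)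
              \<and> infinite C
              \<and> G \<cong> DirProd (G\<lparr>carrier := F\<rparr>) (G\<lparr>carrier := C\<rparr>)))"
proof -
  have n: "2 \<le> n" using assms by simp
  interpret grp: group "Gp n" by (rule group_Gp)
  have inj: "weval (Gp n) (xg n) u = weval (Gp n) (xg n) v \<longleftrightarrow> sn_eq n u v"
    if "u \<in> sn_words n" "v \<in> sn_words n" for u v
  proof
    assume "weval (Gp n) (xg n) u = weval (Gp n) (xg n) v"
    then show "sn_eq n u v" using injective[OF n] that by (simp add: sn_words_def)
  next
    assume "sn_eq n u v"
    then show "weval (Gp n) (xg n) u = weval (Gp n) (xg n) v" by (rule sn_weval[OF _ n])
  qed
  have P1: "\<forall>u\<in>sn_words n. \<forall>v\<in>sn_words n. \<forall>w\<in>sn_words n.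
            (sn_eq n (u @ w) (v @ w) \<longrightarrow> sn_eq n u v) \<and>
            (sn_eq n (w @ u) (w @ v) \<longrightarrow> sn_eq n u v)"
  proof (intro ballI conjI impI)
    fix u v w assume uvw: "u \<in> sn_words n" "v \<in> sn_words n" "w \<in> sn_words n"
    {
      assume "sn_eq n (u @ w) (v @ w)"
      then have "weval (Gp n) (xg n) (u @ w) = weval (Gp n) (xg n) (v @ w)" by (rule sn_weval[OF _ n])
      then have "weval (Gp n) (xg n) u \<otimes>\<^bsub>Gp n\<^esub> weval (Gp n) (xg n) w = weval (Gp n) (xg n) v \<otimes>\<^bsub>Gp n\<^esub> weval (Gp n) (xg n) w"
        by (simp only: wapp)
      then have "weval (Gp n) (xg n) u = weval (Gp n) (xg n) v"
        using grp.right_cancel[OF wcar wcar wcar] by blast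
      then show "sn_eq n u v" using inj uvw by blast
    next
      assume "sn_eq n (w @ u) (w @ v)"
      then have "weval (Gp n) (xg n) (w @ u) = weval (Gp n) (xg n) (w @ v)" by (rule sn_weval[OF _ n])
      then have "weval (Gp n) (xg n) w \<otimes>\<^bsub>Gp n\<^esub> weval (Gp n) (xg n) u = weval (Gp n) (xg n) w \<otimes>\<^bsub>Gp n\<^esub> weval (Gp n) (xg n) v"
        by (simp only: wapp)
      then have "weval (Gp n) (xg n) u = weval (Gp n) (xg n) v"
        by (rule grp.l_cancel[OF _ wcar wcar wcar])
      then show "sn_eq n u v" using inj uvw by blast
    }
  qed
  have P2: "\<forall>w\<in>sn_words n. sn_eq n (w @ [0..<n]) ([0..<n] @ w)"
    using word_comm unfolding sn_words_def by blast
  have P3: "let F = generate (Gp n) (xg n ` {0..<n - 1});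
                 C = generate (Gp n) {weval (Gp n) (xg n) [0..<n]}
             in (\<exists>B. B \<subseteq> F \<and> card B = n - 1 \<and> generate (Gp n) B = F \<and> free_basis (Gp n) B)
              \<and> infinite C
              \<and> Gp n \<cong> DirProd ((Gp n)\<lparr>carrier := F\<rparr>) ((Gp n)\<lparr>carrier := C\<rparr>)"
  proof -
    let ?B = "xg n ` {0..<n - 1}"
    have "?B \<subseteq> generate (Gp n) ?B" by (auto intro: generate.incl)
    then have "\<exists>B. B \<subseteq> generate (Gp n) ?B \<and> card B = n - 1 \<and> generate (Gp n) B = generate (Gp n) ?B \<and> free_basis (Gp n) B"
      using card_B[of n] fb[of n] by blast
    moreover have "infinite (generate (Gp n) {weval (Gp n) (xg n) [0..<n]})"
      unfolding weval_D[OF n] C_eq by (rule C_infinite)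
    moreover have "Gp n \<cong> DirProd ((Gp n)\<lparr>carrier := generate (Gp n) ?B\<rparr>) ((Gp n)\<lparr>carrier := generate (Gp n) {weval (Gp n) (xg n) [0..<n]}\<rparr>)"
      using iso_FC[of n] by (simp only: weval_D[OF n] C_eq F_eq)
    ultimately show ?thesis unfolding Let_def by blast
  qed
  have P4: "\<forall>u\<in>sn_words n. \<forall>v\<in>sn_words n. weval (Gp n) (xg n) u = weval (Gp n) (xg n) v \<longleftrightarrow> sn_eq n u v"
    using inj by blast
  have X: "group (Gp n) \<and> xg n ` {0..<n} \<subseteq> carrier (Gp n)
          \<and> (\<forall>u\<in>sn_words n. \<forall>v\<in>sn_words n. weval (Gp n) (xg n) u = weval (Gp n) (xg n) v \<longleftrightarrow> sn_eq n u v)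
          \<and> carrier (Gp n) = {weval (Gp n) (xg n) w \<otimes>\<^bsub>Gp n\<^esub> inv\<^bsub>Gp n\<^esub> (weval (Gp n) (xg n) [0..<n] [^]\<^bsub>Gp n\<^esub> k) | w k.
                          w \<in> sn_words n \<and> (k :: nat) \<ge> 0}
          \<and> (let F = generate (Gp n) (xg n ` {0..<n - 1});
                 C = generate (Gp n) {weval (Gp n) (xg n) [0..<n]}
             in (\<exists>B. B \<subseteq> F \<and> card B = n - 1 \<and> generate (Gp n) B = F \<and> free_basis (Gp n) B)
              \<and> infinite C
              \<and> Gp n \<cong> DirProd ((Gp n)\<lparr>carrier := F\<rparr>) ((Gp n)\<lparr>carrier := C\<rparr>))"
  proof (intro conjI)
    show "group (Gp n)" by (rule group_Gp)
    show "xg n ` {0..<n} \<subseteq> carrier (Gp n)" using xg_carrier[of n] by blast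
  qed (rule P4, rule carrier_eq[OF n], rule P3)
  show ?thesis
  proof (intro conjI)
    show "\<exists>(G :: (int list \<times> int) monoid) (x :: nat \<Rightarrow> int list \<times> int).
            group G \<and> x ` {0..<n} \<subseteq> carrier G
          \<and> (\<forall>u\<in>sn_words n. \<forall>v\<in>sn_words n. weval G x u = weval G x v \<longleftrightarrow> sn_eq n u v)
          \<and> carrier G = {weval G x w \<otimes>\<^bsub>G\<^esub> inv\<^bsub>G\<^esub> (weval G x [0..<n] [^]\<^bsub>G\<^esub> k) | w k.
                          w \<in> sn_words n \<and> (k :: nat) \<ge> 0}
          \<and> (let F = generate G (x ` {0..<n - 1});
                 C = generate G {weval G x [0..<n]}
             in (\<exists>B. B \<subseteq> F \<and> card B = n - 1 \<and> generate G B = F \<and> free_basis G B)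
              \<and> infinite C
              \<and> G \<cong> DirProd (G\<lparr>carrier := F\<rparr>) (G\<lparr>carrier := C\<rparr>))"
      by (rule exI[of _ "Gp n"], rule exI[of _ "xg n"], rule X)
  qed (rule P1, rule P2)
qed

end
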